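(* Let $k\ge 5$ be an integer and let $h_2(j)=k^2j^2+(k-k^2)j+1$ for integers $j\ge0$. Then $h_2\in\mathcal H_0$, $\beta_j^5(h_2)\ge 0$ for all $0\le j\le 5$, $\beta_3^6(h_2)<0$, and $\operatorname{hdepth}(h_2)=5$.
   Context: Let $\mathcal H_0$ denote the set of functions $h:\mathbb Z_{\ge 0}\to\mathbb Z_{\ge 0}$ with $h(0)>0$. For $h\in\mathcal H_0$ and integers $0\le k\le d$, put $\beta_k^d(h)=\sum_{j=0}^k(-1)^{k-j}\binom{d-j}{k-j}h(j)$. The Hilbert depth of $h$ is $\operatorname{hdepth}(h)=\max\{d\in\mathbb Z_{\ge0}:\ \beta_k^d(h)\ge 0\text{ for all }0\le k\le d\}$; this set contains $d=0$ and is known to be bounded above by $\lfloor h(1)/h(0)\rfloor$, so the maximum exists. *)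

theory Defs
  imports Main
begin

text \<open>Functions Z_{>=0} -> Z_{>=0} are modelled as nat => int with nonnegative values,
so that membership in H0 is a genuine condition.\<close>

definition H0 :: "(nat \<Rightarrow> int) set" where
  "H0 = {h. (\<forall>j. h j \<ge> 0) \<and> h 0 > 0}"

definition beta :: "nat \<Rightarrow> nat \<Rightarrow> (nat \<Rightarrow> int) \<Rightarrow> int" where
  "beta k d h = (\<Sum>j\<le>k. (-1) ^ (k - j) * int ((d - j) choose (k - j)) * h j)"

definition hdepth :: "(nat \<Rightarrow> int) \<Rightarrow> nat" where
  "hdepth h = (GREATEST d. \<forall>k\<le>d. beta k d h \<ge> 0)"

end

theory Submission
  imports Defs
begin

lemma b5: assumes "(k::int) \<ge> 5" "h2 = (\<lambda>j::nat. k^2 * (int j)^2 + (k - k^2) * int j + 1)" "j \<le> 5"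
  shows "beta j 5 h2 \<ge> 0"
proof -
  have kk: "k \<le> k*k" using assms(1) using mult_left_mono[of 1 k k] by simp
  then have kk2: "k*2 \<le> k*(k*2)" by simp
  have "j \<in> {0,1,2,3,4,5}" using assms(3) by auto
  then show ?thesis using assms
    apply (auto simp: beta_def numeral_eq_Suc atMost_Suc power2_eq_square algebra_simps)
    using kk2 by linarith
qed

lemma choose2: "2 * (n choose 2) = n*(n-1)"
proof (induction n)
  case 0 then show ?case by simp
next
  case (Suc n)
  have "(Suc n) choose 2 = n + (n choose 2)" by (simp add: numeral_eq_Suc)
  then show ?case using Suc by (cases n; simp add: algebra_simps)
qed

lemma choose3: "6 * (n choose 3) = n*(n-1)*(n-2)"
proof (induction n)
  case 0 then show ?case by simp
next
  case (Suc n)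
  have "(Suc n) choose 3 = (n choose 2) + (n choose 3)"
    by (simp add: numeral_eq_Suc)
  moreover have "2 * (n choose 2) = n*(n-1)" by (rule choose2)
  ultimately show ?case using Suc
    by (cases n; cases "n - 1"; simp add: algebra_simps)
qed

lemma beta3: 
  assumes "d \<ge> 3"
  shows "6 * beta 3 d h = - int (d*(d-1)*(d-2)) * h 0 + 3 * int ((d-1)*(d-2)) * h 1 - 6 * int (d-2) * h 2 + 6 * h 3"
proof -
  have at3: "{..3::nat} = {0,1,2,3}" by auto
  have e0: "beta 3 d h = - int (d choose 3) * h 0 + int ((d-1) choose 2) * h 1 - int (d-2) * h 2 + h 3"
    using assms by (simp add: beta_def at3 of_nat_diff algebra_simps)
  have c3: "6 * int (d choose 3) = int (d*(d-1)*(d-2))" using choose3[of d] by (metis of_nat_mult of_nat_numeral)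
  have "2 * ((d-1) choose 2) = (d-1)*(d-2)" using choose2[of "d-1"] by (metis diff_diff_left one_add_one)
  then have c2: "2 * int ((d-1) choose 2) = int ((d-1)*(d-2))" by (metis of_nat_mult of_nat_numeral)
  have "6 * beta 3 d h = - (6 * int (d choose 3)) * h 0 + 3 * (2 * int ((d-1) choose 2)) * h 1 - 6 * int (d-2) * h 2 + 6 * h 3"
    unfolding e0 by algebra
  then show ?thesis unfolding c3 c2 .
qed

lemma poly_neg:
  fixes a b :: int assumes "a \<ge> 0" "b \<ge> 0"
  shows "-(6+a)*(5+a)*(4+a) + 3*(6+a+b)*(5+a)*(4+a) - 6*(4+a)*(2*(5+a+b)^2+2*(5+a+b)+1) + 6*(6*(5+a+b)^2+3*(5+a+b)+1) < 0"
proof -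
  have "-(6+a)*(5+a)*(4+a) + 3*(6+a+b)*(5+a)*(4+a) - 6*(4+a)*(2*(5+a+b)^2+2*(5+a+b)+1) + 6*(6*(5+a+b)^2+3*(5+a+b)+1)
     = -(228 + 90*b + 12*b*b + 368*a + 129*a*b + 12*a*b*b + 114*a*a + 21*a*a*b + 10*a*a*a)"
    by (simp add: power2_eq_square algebra_simps)
  moreover have "0 \<le> 90*b + 12*b*b + 368*a + 129*a*b + 12*a*b*b + 114*a*a + 21*a*a*b + 10*a*a*a"
    using assms by simp
  ultimately show ?thesis by linarith
qed

lemma beta3_neg:
  fixes k :: int
  assumes "6 \<le> d" "int d \<le> k + 1"
  defines "h2 \<equiv> (\<lambda>j::nat. k^2 * (int j)^2 + (k - k^2) * int j + 1)"
  shows "beta 3 d h2 < 0"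
proof -
  define a where "a = int d - 6"
  define b where "b = k + 1 - int d"
  have a0: "a \<ge> 0" and b0: "b \<ge> 0" using assms(1,2) by (auto simp: a_def b_def)
  have D: "int d = 6 + a" and K: "k = 5 + a + b" by (auto simp: a_def b_def)
  have i1: "int (d*(d-1)*(d-2)) = (6+a)*(5+a)*(4+a)" using assms(1) D by (simp add: of_nat_diff)
  have i2: "int ((d-1)*(d-2)) = (5+a)*(4+a)" using assms(1) D by (simp add: of_nat_diff)
  have i3: "int (d-2) = 4+a" using assms(1) D by (simp add: of_nat_diff)
  have "6 * beta 3 d h2 = - int (d*(d-1)*(d-2)) * h2 0 + 3 * int ((d-1)*(d-2)) * h2 1 - 6 * int (d-2) * h2 2 + 6 * h2 3"
    using assms(1) by (intro beta3) simp
  also have "\<dots> = -(6+a)*(5+a)*(4+a) + 3*(6+a+b)*(5+a)*(4+a) - 6*(4+a)*(2*(5+a+b)^2+2*(5+a+b)+1) + 6*(6*(5+a+b)^2+3*(5+a+b)+1)"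
    unfolding i1 i2 i3 h2_def K by (simp add: power2_eq_square algebra_simps)
  also have "\<dots> < 0" by (rule poly_neg[OF a0 b0])
  finally show ?thesis by simp
qed

lemma beta1: "beta 1 d h = - int d * h 0 + h 1"
proof -
  have "{..1::nat} = {0,1}" by auto
  then show ?thesis by (simp add: beta_def)
qed

theorem mainTheorem8:
  fixes k :: int
  assumes "k \<ge> 5"
  defines "h2 \<equiv> (\<lambda>j::nat. k^2 * (int j)^2 + (k - k^2) * int j + 1)"
  shows "h2 \<in> H0 \<and> (\<forall>j\<le>5. beta j 5 h2 \<ge> 0) \<and> beta 3 6 h2 < 0 \<and> hdepth h2 = 5"
proof -
  have H: "h2 \<in> H0"
    unfolding H0_def
  proof (intro CollectI conjI allI)
    fix j :: nat
    have e: "h2 j = k^2 * (int j * (int j - 1)) + k * int j + 1"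
      unfolding h2_def by (simp add: power2_eq_square algebra_simps)
    have "int j * (int j - 1) \<ge> 0" by (cases j) auto
    then show "h2 j \<ge> 0" unfolding e using assms by simp
  qed (simp add: h2_def)
  have B5: "\<forall>j\<le>5. beta j 5 h2 \<ge> 0"
    using b5[OF assms(1), of h2] h2_def by blast
  have B36: "beta 3 6 h2 < 0"
    using beta3_neg[of 6 k] assms unfolding h2_def by simp
  have "hdepth h2 = 5"
    unfolding hdepth_def
  proof (rule Greatest_equality)
    show "\<forall>ka\<le>5. 0 \<le> beta ka 5 h2" by (rule B5)
  next
    fix y assume Y: "\<forall>ka\<le>y. 0 \<le> beta ka y h2"
    show "y \<le> 5"
    proof (rule ccontr)
      assume "\<not> y \<le> 5"
      then have y6: "6 \<le> y" by simp
      show False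
      proof (cases "int y \<le> k + 1")
        case True
        then have "beta 3 y h2 < 0" using beta3_neg[OF y6 True] unfolding h2_def by simp
        moreover have "0 \<le> beta 3 y h2" using Y y6 by auto
        ultimately show False by linarith
      next
        case False
        have "beta 1 y h2 = - int y + k + 1" unfolding beta1 h2_def by simp
        then have "beta 1 y h2 < 0" using False by simp
        moreover have "0 \<le> beta 1 y h2" using Y y6 by auto
        ultimately show False by linarith
      qed
    qed
  qed
  then show ?thesis using H B5 B36 by blast
qed

end
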